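(* Let $v_1,\dots,v_n$ be gross substitutes valuations over $m$ items. Consider the English Walrasian mechanism with bidding space $\mathcal{B}=\textsc{Gs}$. Then this mechanism has a pure Nash equilibrium $\mathbf{b}$ (with respect to the true valuations $v_1,\dots,v_n$) whose allocation maximizes $\sum_i v_i(\mathbf{x}_i)$ over all partitions of the items, and in which every agent's strategy $b_i$ is a non-exposure strategy, i.e. $\pi_i(b_i,\mathbf{b}'_{-i})\le v_i(\mathbf{x}_i(b_i,\mathbf{b}'_{-i}))$ for every $\mathbf{b}'_{-i}\in\mathcal{B}^{n-1}$.
   Context: There are $m$ items and $n$ agents. A valuation is a function $v:\{0,1\}^m\to\mathbb{R}_+$ with $v(\mathbf{0})=0$ and $v(\mathbf{x})\le v(\mathbf{y})$ whenever $\mathbf{x}\le\mathbf{y}$; it is extended to $\mathbb{Z}_+^m$ by $v(\mathbf{x})=v(\min(\mathbf{x},\mathbf{1}))$ (componentwise min). For prices $\mathbf{p}\in\mathbb{R}^m_+$ the demand is $D_v(\mathbf{p})=\arg\max_{\mathbf{x}\in\{0,1\}^m}[v(\mathbf{x})-\mathbf{p}\cdot\mathbf{x}]$. $v$ is gross substitutes ($v\in\textsc{Gs}$) if for any prices $\mathbf{p}\le\mathbf{q}$, with $S=\{j:p_j=q_j\}$, and any $\mathbf{x}\in D_v(\mathbf{p})$, there is $\mathbf{y}\in D_v(\mathbf{q})$ with $\mathbf{y}\ge \mathbf{x}\cdot\mathbf{1}_S$ componentwise, i.e. $y_j\ge x_j$ for all $j\in S$. For declared valuations $\mathbf{b}=(b_1,\dots,b_n)$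 define $W^{\mathbf{b}}:\mathbb{Z}_+^m\to\mathbb{R}_+$ by $W^{\mathbf{b}}(\mathbf{x})=\max\{\sum_i b_i(\mathbf{x}_i):\sum_i\mathbf{x}_i\le\mathbf{x},\ \mathbf{x}_i\in\{0,1\}^m\}$, and marginals $f(\mathbf{y}\mid\mathbf{x})=f(\mathbf{y}+\mathbf{x})-f(\mathbf{x})$; $\mathbf{1}_j$ is the $j$-th unit vector and $\mathbf{1}$ the all-ones vector. The English Walrasian mechanism: each agent $i$ reports $b_i\in\mathcal{B}$; the mechanism allocates bundles $\mathbf{x}_1(\mathbf{b}),\dots,\mathbf{x}_n(\mathbf{b})$ forming a partition of the items maximizing $\sum_i b_i(\mathbf{x}_i)$, and charges $\pi_i(\mathbf{b})=\sum_{j:\, x_{ij}(\mathbf{b})=1}W^{\mathbf{b}}(\mathbf{1}_j\mid\mathbf{1})$ (the minimal Walrasian prices of the declared market). Agent $i$'s utility is $u_i(v_i;\mathbf{b})=v_i(\mathbf{x}_i(\mathbf{b}))-\pi_i(\mathbf{b})$. A pure Nash equilibrium is a profile $\mathbf{b}\in\mathcal{B}^n$ with $u_i(v_i;\mathbf{b})\ge u_i(v_i;b_i',\mathbf{b}_{-i})$ for all $i$ and all $b_i'\in\mathcal{B}$. *)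

theory Defs
  imports Complex_Main
begin

(* Items: finite type 'item ; agents: finite type 'agent.
   Bundles in {0,1}^m are represented as sets of items; bundles in Z_+^m as
   functions 'item => nat. *)

definition valuation :: "('item::finite set \<Rightarrow> real) \<Rightarrow> bool" where
  "valuation v \<longleftrightarrow> v {} = 0 \<and> (\<forall>S. 0 \<le> v S) \<and> (\<forall>S T. S \<subseteq> T \<longrightarrow> v S \<le> v T)"

definition demand :: "('item::finite set \<Rightarrow> real) \<Rightarrow> ('item \<Rightarrow> real) \<Rightarrow> 'item set set" where
  "demand v p = {x. \<forall>y. v y - (\<Sum>j\<in>y. p j) \<le> v x - (\<Sum>j\<in>x. p j)}"

definition GS :: "('item::finite set \<Rightarrow> real) \<Rightarrow> bool" where
  "GS v \<longleftrightarrow> valuation v \<and>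
     (\<forall>p q. (\<forall>j. 0 \<le> p j \<and> p j \<le> q j) \<longrightarrow>
        (\<forall>x\<in>demand v p. \<exists>y\<in>demand v q. \<forall>j. p j = q j \<longrightarrow> j \<in> x \<longrightarrow> j \<in> y))"

definition W :: "('agent::finite \<Rightarrow> 'item::finite set \<Rightarrow> real) \<Rightarrow> ('item \<Rightarrow> nat) \<Rightarrow> real" where
  "W b x = Max ((\<lambda>S. \<Sum>i\<in>UNIV. b i (S i)) `
                 {S :: 'agent \<Rightarrow> 'item set. \<forall>j. card {i. j \<in> S i} \<le> x j})"

definition min_price :: "('agent::finite \<Rightarrow> 'item::finite set \<Rightarrow> real) \<Rightarrow> 'item \<Rightarrow> real" where
  "min_price b j = W b (\<lambda>k. 1 + (if k = j then 1 else 0)) - W b (\<lambda>_. 1)"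

definition is_partition :: "('agent::finite \<Rightarrow> 'item::finite set) \<Rightarrow> bool" where
  "is_partition X \<longleftrightarrow> (\<forall>i k. i \<noteq> k \<longrightarrow> X i \<inter> X k = {}) \<and> (\<Union>i. X i) = UNIV"

definition optimal_partition ::
  "('agent::finite \<Rightarrow> 'item::finite set \<Rightarrow> real) \<Rightarrow> ('agent \<Rightarrow> 'item set) \<Rightarrow> bool" where
  "optimal_partition b X \<longleftrightarrow> is_partition X \<and>
     (\<forall>Y. is_partition Y \<longrightarrow> (\<Sum>i\<in>UNIV. b i (Y i)) \<le> (\<Sum>i\<in>UNIV. b i (X i)))"

(* An allocation rule of the English Walrasian mechanism: for every profile of
   GS bids it returns a welfare-maximizing partition (arbitrary tie-breaking). *)
definition EW_allocation_rule ::
  "(('agent::finite \<Rightarrow> 'item::finite set \<Rightarrow> real) \<Rightarrow> 'agent \<Rightarrow> 'item set) \<Rightarrow> bool" where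
  "EW_allocation_rule X \<longleftrightarrow> (\<forall>b. (\<forall>i. GS (b i)) \<longrightarrow> optimal_partition b (X b))"

definition payment ::
  "(('agent::finite \<Rightarrow> 'item::finite set \<Rightarrow> real) \<Rightarrow> 'agent \<Rightarrow> 'item set)
     \<Rightarrow> ('agent \<Rightarrow> 'item set \<Rightarrow> real) \<Rightarrow> 'agent \<Rightarrow> real" where
  "payment X b i = (\<Sum>j\<in>X b i. min_price b j)"

definition utility ::
  "(('agent::finite \<Rightarrow> 'item::finite set \<Rightarrow> real) \<Rightarrow> 'agent \<Rightarrow> 'item set)
     \<Rightarrow> ('item set \<Rightarrow> real) \<Rightarrow> ('agent \<Rightarrow> 'item set \<Rightarrow> real) \<Rightarrow> 'agent \<Rightarrow> real" where
  "utility X vi b i = vi (X b i) - payment X b i"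

definition pure_nash ::
  "(('agent::finite \<Rightarrow> 'item::finite set \<Rightarrow> real) \<Rightarrow> 'agent \<Rightarrow> 'item set)
     \<Rightarrow> ('agent \<Rightarrow> 'item set \<Rightarrow> real) \<Rightarrow> ('agent \<Rightarrow> 'item set \<Rightarrow> real) \<Rightarrow> bool" where
  "pure_nash X v b \<longleftrightarrow> (\<forall>i. GS (b i)) \<and>
     (\<forall>i bi'. GS bi' \<longrightarrow> utility X (v i) (b(i := bi')) i \<le> utility X (v i) b i)"

definition non_exposure ::
  "(('agent::finite \<Rightarrow> 'item::finite set \<Rightarrow> real) \<Rightarrow> 'agent \<Rightarrow> 'item set)
     \<Rightarrow> ('item set \<Rightarrow> real) \<Rightarrow> 'agent \<Rightarrow> ('item set \<Rightarrow> real) \<Rightarrow> bool" where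
  "non_exposure X vi i bi \<longleftrightarrow>
     (\<forall>b'. (\<forall>k. k \<noteq> i \<longrightarrow> GS (b' k)) \<longrightarrow>
        payment X (b'(i := bi)) i \<le> vi (X (b'(i := bi)) i))"

end

theory Submission
  imports Defs
begin


lemma GS_val: "GS v \<Longrightarrow> valuation v" by (simp add: GS_def)
lemma val_mono: "valuation v \<Longrightarrow> S \<subseteq> T \<Longrightarrow> v S \<le> v T" by (simp add: valuation_def)
lemma val_nonneg: "valuation v \<Longrightarrow> 0 \<le> v S" by (simp add: valuation_def)
lemma val_empty: "valuation v \<Longrightarrow> v {} = 0" by (simp add: valuation_def)

lemma finite_argmax:
  assumes "finite A" "A \<noteq> {}"
  shows "\<exists>x\<in>A. \<forall>y\<in>A. (f y :: real) \<le> f x"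
proof -
  have "Max (f ` A) \<in> f ` A" using assms by simp
  then obtain x where x: "x \<in> A" "f x = Max (f ` A)" by auto
  have "\<forall>y\<in>A. f y \<le> f x" using assms x by simp
  with x show ?thesis by blast
qed

lemma demand_ne: "\<exists>x. x \<in> demand (v::'i::finite set \<Rightarrow> real) p"
proof -
  obtain x where "\<forall>y\<in>(UNIV::'i set set). v y - (\<Sum>j\<in>y. p j) \<le> v x - (\<Sum>j\<in>x. p j)"
    using finite_argmax[of "UNIV::'i set set" "\<lambda>x. v x - (\<Sum>j\<in>x. p j)"] by auto
  then show ?thesis unfolding demand_def by blast
qed

lemma sum_ge_member: "\<forall>j. 0 \<le> (p::'i::finite \<Rightarrow> real) j \<Longrightarrow> j \<in> y \<Longrightarrow> p j \<le> (\<Sum>l\<in>y. p l)"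
  by (rule member_le_sum) auto

lemma sum_nonneg': "\<forall>j. 0 \<le> (p::'i::finite \<Rightarrow> real) j \<Longrightarrow> 0 \<le> (\<Sum>l\<in>y. p l)"
  by (simp add: sum_nonneg)

lemma sum_mono_sub: "\<forall>j. 0 \<le> (p::'i::finite \<Rightarrow> real) j \<Longrightarrow> y \<subseteq> z \<Longrightarrow> (\<Sum>l\<in>y. p l) \<le> (\<Sum>l\<in>z. p l)"
  by (rule sum_mono2) auto

lemma GS_submod_basic:
  fixes v :: "'i::finite set \<Rightarrow> real"
  assumes gs: "GS v" and aS: "a \<notin> S" and bS: "b \<notin> S" and ab: "a \<noteq> b"
  shows "v (S \<union> {a,b}) - v (S \<union> {b}) \<le> v (S \<union> {a}) - v S"
proof (rule ccontr)
  assume neg: "\<not> ?thesis"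
  have val: "valuation v" using gs by (rule GS_val)
  define \<alpha> where "\<alpha> = v (S \<union> {a}) - v S"
  define \<beta> where "\<beta> = v (S \<union> {a,b}) - v (S \<union> {b})"
  define \<gamma> where "\<gamma> = (\<alpha> + \<beta>) / 2"
  define H where "H = v UNIV + 1"
  have a0: "0 \<le> \<alpha>" unfolding \<alpha>_def using val_mono[OF val, of S "S \<union> {a}"] by auto
  have ab2: "\<alpha> < \<gamma>" "\<gamma> < \<beta>" using neg unfolding \<alpha>_def \<beta>_def \<gamma>_def by auto
  have H: "v T < H" for T unfolding H_def using val_mono[OF val, of T UNIV] by simp
  have H0: "0 \<le> H" using H[of "{}"] val_empty[OF val] by simp
  define p where "p = (\<lambda>j. if j \<in> S then 0 else if j = a then \<gamma> else if j = b then 0 else H)"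
  define q where "q = p(b := H)"
  have pq: "\<forall>j. 0 \<le> p j \<and> p j \<le> q j" using a0 ab2 H0 ab unfolding p_def q_def by auto
  have q0: "\<forall>j. 0 \<le> q j" using pq by (meson order.trans)
  have p0: "\<forall>j. 0 \<le> p j" using pq by force
  have xd: "S \<union> {a,b} \<in> demand v p"
    unfolding demand_def
  proof (safe)
    fix y
    have pab: "(\<Sum>j\<in>S \<union> {a,b}. p j) = \<gamma>"
    proof -
      have "(\<Sum>j\<in>S \<union> {a,b}. p j) = (\<Sum>j\<in>S \<union> {a,b}. if j = a then \<gamma> else 0)"
        by (rule sum.cong) (auto simp: p_def aS)
      also have "\<dots> = \<gamma>" by (simp add: sum.delta)
      finally show ?thesis .
    qed
    show "v y - (\<Sum>j\<in>y. p j) \<le> v (S \<union> {a,b}) - (\<Sum>j\<in>S \<union> {a,b}. p j)"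
    proof (cases "y \<subseteq> S \<union> {a,b}")
      case False
      then obtain j where j: "j \<in> y" "j \<notin> S \<union> {a,b}" by auto
      have "H \<le> (\<Sum>l\<in>y. p l)" using sum_ge_member[OF p0 j(1)] j(2) by (simp add: p_def)
      moreover have "v (S \<union> {b}) \<ge> 0" using val by (rule val_nonneg)
      ultimately show ?thesis using H[of y] ab2 pab unfolding \<beta>_def by linarith
    next
      case True
      have py: "(\<Sum>l\<in>y. p l) = (if a \<in> y then \<gamma> else 0)"
      proof -
        have "(\<Sum>l\<in>y. p l) = (\<Sum>l\<in>y. if l = a then \<gamma> else 0)"
          by (rule sum.cong) (use True aS in \<open>auto simp: p_def\<close>)
        also have "\<dots> = (if a \<in> y then \<gamma> else 0)" by (simp add: sum.delta)
        finally show ?thesis .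
      qed
      show ?thesis
      proof (cases "a \<in> y")
        case True
        then show ?thesis using py pab val_mono[OF val \<open>y \<subseteq> S \<union> {a,b}\<close>] by simp
      next
        case False
        then have "y \<subseteq> S \<union> {b}" using True by auto
        then have "v y \<le> v (S \<union> {b})" using val by (rule val_mono[rotated])
        then show ?thesis using py pab False ab2 unfolding \<beta>_def by simp
      qed
    qed
  qed
  obtain y where yd: "y \<in> demand v q" and yc: "\<forall>j. p j = q j \<longrightarrow> j \<in> S \<union> {a,b} \<longrightarrow> j \<in> y"
    using gs pq xd unfolding GS_def by blast
  have Say: "S \<union> {a} \<subseteq> y"
  proof
    fix j assume "j \<in> S \<union> {a}"
    then show "j \<in> y" using yc[rule_format, of j] ab bS unfolding q_def by (cases "j = b") auto
  qed
  have vS: "v S - (\<Sum>j\<in>S. q j) \<le> v y - (\<Sum>j\<in>y. q j)" using yd unfolding demand_def by blast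
  have qS: "(\<Sum>j\<in>S. q j) = 0" by (rule sum.neutral) (use bS in \<open>auto simp: q_def p_def\<close>)
  have yeq: "y = S \<union> {a}"
  proof (rule ccontr)
    assume "y \<noteq> S \<union> {a}"
    then obtain j where j: "j \<in> y" "j \<notin> S \<union> {a}" using Say by auto
    have "q j = H" using j unfolding q_def p_def by auto
    then have "H \<le> (\<Sum>l\<in>y. q l)" using sum_ge_member[OF q0 j(1)] by simp
    then show False using vS qS H[of y] val_nonneg[OF val, of S] by linarith
  qed
  have qSa: "(\<Sum>j\<in>S \<union> {a}. q j) = \<gamma>"
  proof -
    have "(\<Sum>j\<in>S \<union> {a}. q j) = (\<Sum>j\<in>S \<union> {a}. if j = a then \<gamma> else 0)"
      by (rule sum.cong) (use aS ab bS in \<open>auto simp: q_def p_def\<close>)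
    also have "\<dots> = \<gamma>" by (simp add: sum.delta)
    finally show ?thesis .
  qed
  show False using vS qS yeq qSa ab2 unfolding \<alpha>_def by simp
qed



lemma GS_marg_dec:
  fixes v :: "'i::finite set \<Rightarrow> real"
  assumes gs: "GS v" and AB: "A \<subseteq> B" and aB: "a \<notin> B"
  shows "v (B \<union> {a}) - v B \<le> v (A \<union> {a}) - v A"
proof -
  have "\<And>F. finite F \<Longrightarrow> a \<notin> A \<union> F \<Longrightarrow> v (A \<union> F \<union> {a}) - v (A \<union> F) \<le> v (A \<union> {a}) - v A"
  proof -
    fix F :: "'i set" assume "finite F" "a \<notin> A \<union> F"
    then show "v (A \<union> F \<union> {a}) - v (A \<union> F) \<le> v (A \<union> {a}) - v A"
    proof (induction F rule: finite_induct)
      case empty then show ?case by simp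
    next
      case (insert x F)
      show ?case
      proof (cases "x \<in> A \<union> F")
        case True
        then have "A \<union> insert x F = A \<union> F" by auto
        then show ?thesis using insert by simp
      next
        case False
        have ax: "a \<noteq> x" using insert by auto
        have "v ((A \<union> F) \<union> {a,x}) - v ((A \<union> F) \<union> {x}) \<le> v ((A \<union> F) \<union> {a}) - v (A \<union> F)"
          by (rule GS_submod_basic[OF gs]) (use insert False ax in auto)
        moreover have "(A \<union> F) \<union> {a,x} = A \<union> insert x F \<union> {a}" "(A \<union> F) \<union> {x} = A \<union> insert x F" by auto
        ultimately show ?thesis using insert by simp
      qed
    qed
  qed
  from this[of "B - A"] AB aB show ?thesis
    by (metis Diff_partition Un_Diff_cancel finite)
qed

lemma GS_marg_sum:
  fixes v :: "'i::finite set \<Rightarrow> real"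
  assumes gs: "GS v" and disj: "C \<inter> T = {}"
  shows "v (C \<union> T) - v C \<le> (\<Sum>j\<in>T. v (C \<union> {j}) - v C)"
proof -
  have "finite T" by simp
  then show ?thesis using disj
  proof (induction T rule: finite_induct)
    case empty then show ?case by simp
  next
    case (insert x T)
    have "v (C \<union> T \<union> {x}) - v (C \<union> T) \<le> v (C \<union> {x}) - v C"
      by (rule GS_marg_dec[OF gs]) (use insert in auto)
    moreover have "C \<union> insert x T = C \<union> T \<union> {x}" by auto
    ultimately show ?case using insert by simp
  qed
qed

lemma GS_restrict:
  fixes v :: "'i::finite set \<Rightarrow> real"
  assumes gs: "GS v"
  shows "GS (\<lambda>S. v (S \<inter> A))"
proof -
  have val: "valuation v" using gs by (rule GS_val)
  let ?b = "\<lambda>S. v (S \<inter> A)"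
  have valb: "valuation ?b" using val unfolding valuation_def by (auto intro: Int_mono)
  define H where "H = v UNIV + 1"
  have H: "v T < H" for T unfolding H_def using val_mono[OF val, of T UNIV] by simp
  have H0: "0 \<le> H" using H[of "{}"] val_empty[OF val] by simp
  show ?thesis unfolding GS_def
  proof (intro conjI valb allI impI ballI)
    fix p q :: "'i \<Rightarrow> real" and x
    assume pq: "\<forall>j. 0 \<le> p j \<and> p j \<le> q j" and xd: "x \<in> demand ?b p"
    have p0: "\<forall>j. 0 \<le> p j" using pq by blast
    have q0: "\<forall>j. 0 \<le> q j" using pq by (meson order.trans)
    define ph where "ph = (\<lambda>j. if j \<in> A then p j else H)"
    define qh where "qh = (\<lambda>j. if j \<in> A then q j else H)"
    have ph0: "\<forall>j. 0 \<le> ph j" using p0 H0 by (simp add: ph_def)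
    have qh0: "\<forall>j. 0 \<le> qh j" using q0 H0 by (simp add: qh_def)
    have pqh: "\<forall>j. 0 \<le> ph j \<and> ph j \<le> qh j" using pq H0 by (simp add: ph_def qh_def)
    have big: "v y - (\<Sum>j\<in>y. r j) < 0" if ny: "\<not> y \<subseteq> A" and r0: "\<forall>j. 0 \<le> r j" and rH: "\<forall>j. j \<notin> A \<longrightarrow> r j = H" for y r
    proof -
      obtain j where j: "j \<in> y" "j \<notin> A" using ny by blast
      have "H \<le> (\<Sum>l\<in>y. r l)" using sum_ge_member[OF r0 j(1)] j(2) rH by simp
      then show ?thesis using H[of y] by simp
    qed
    have xv: "\<forall>y. ?b y - (\<Sum>j\<in>y. p j) \<le> ?b x - (\<Sum>j\<in>x. p j)" using xd unfolding demand_def by blast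
    have xpos: "0 \<le> ?b x - (\<Sum>j\<in>x. p j)" using xv[rule_format, of "{}"] val_empty[OF val] by simp
    have sumA: "(\<Sum>j\<in>x \<inter> A. p j) \<le> (\<Sum>j\<in>x. p j)" by (rule sum_mono_sub[OF p0]) auto
    have phA: "(\<Sum>j\<in>y. ph j) = (\<Sum>j\<in>y. p j)" if "y \<subseteq> A" for y
      by (rule sum.cong) (use that in \<open>auto simp: ph_def\<close>)
    have qhA: "(\<Sum>j\<in>y. qh j) = (\<Sum>j\<in>y. q j)" if "y \<subseteq> A" for y
      by (rule sum.cong) (use that in \<open>auto simp: qh_def\<close>)
    have xAd: "x \<inter> A \<in> demand v ph"
      unfolding demand_def
    proof (safe)
      fix y
      show "v y - (\<Sum>j\<in>y. ph j) \<le> v (x \<inter> A) - (\<Sum>j\<in>x \<inter> A. ph j)"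
      proof (cases "y \<subseteq> A")
        case False
        have "v y - (\<Sum>j\<in>y. ph j) < 0" by (rule big[OF False ph0]) (simp add: ph_def)
        then show ?thesis using xpos sumA phA[of "x \<inter> A"] by simp
      next
        case True
        then have "y \<inter> A = y" by auto
        then show ?thesis using xv[rule_format, of y] sumA phA[OF True] phA[of "x \<inter> A"] by simp
      qed
    qed
    obtain y where yd: "y \<in> demand v qh" and yc: "\<forall>j. ph j = qh j \<longrightarrow> j \<in> x \<inter> A \<longrightarrow> j \<in> y"
      using gs pqh xAd unfolding GS_def by blast
    have yv: "\<forall>z. v z - (\<Sum>j\<in>z. qh j) \<le> v y - (\<Sum>j\<in>y. qh j)" using yd unfolding demand_def by blast
    have yA: "y \<subseteq> A"
    proof (rule ccontr)
      assume "\<not> y \<subseteq> A"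
      then have "v y - (\<Sum>j\<in>y. qh j) < 0" by (rule big[OF _ qh0]) (simp add: qh_def)
      then show False using yv[rule_format, of "{}"] val_empty[OF val] by simp
    qed
    define y' where "y' = y \<union> {j. j \<notin> A \<and> q j = 0}"
    have y'A: "y' \<inter> A = y" using yA unfolding y'_def by auto
    have qy': "(\<Sum>j\<in>y'. q j) = (\<Sum>j\<in>y. q j)"
    proof -
      have "(\<Sum>j\<in>y'. q j) = (\<Sum>j\<in>y. q j) + (\<Sum>j\<in>{j. j \<notin> A \<and> q j = 0}. q j)"
        unfolding y'_def by (rule sum.union_disjoint) (use yA in auto)
      then show ?thesis by simp
    qed
    show "\<exists>y\<in>demand ?b q. \<forall>j. p j = q j \<longrightarrow> j \<in> x \<longrightarrow> j \<in> y"
    proof (intro bexI allI impI)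
      show "y' \<in> demand ?b q"
        unfolding demand_def
      proof (safe)
        fix z
        have "(\<Sum>j\<in>z \<inter> A. q j) \<le> (\<Sum>j\<in>z. q j)" by (rule sum_mono_sub[OF q0]) auto
        moreover have "v (z \<inter> A) - (\<Sum>j\<in>z \<inter> A. qh j) \<le> v y - (\<Sum>j\<in>y. qh j)" using yv by blast
        moreover have "(\<Sum>j\<in>z \<inter> A. qh j) = (\<Sum>j\<in>z \<inter> A. q j)" by (rule qhA) auto
        ultimately show "v (z \<inter> A) - (\<Sum>j\<in>z. q j) \<le> v (y' \<inter> A) - (\<Sum>j\<in>y'. q j)"
          using y'A qy' qhA[OF yA] by simp
      qed
    next
      fix j assume pj: "p j = q j" and jx: "j \<in> x"
      show "j \<in> y'"
      proof (cases "j \<in> A")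
        case True
        then show ?thesis using yc[rule_format, of j] pj jx unfolding ph_def qh_def y'_def by auto
      next
        case False
        have "p j = 0"
        proof (rule ccontr)
          assume "p j \<noteq> 0"
          then have pjp: "p j > 0" using p0 by (simp add: order_less_le)
          have "(\<Sum>l\<in>x. p l) = p j + (\<Sum>l\<in>x - {j}. p l)" using jx by (simp add: sum.remove)
          moreover have "(x - {j}) \<inter> A = x \<inter> A" using False by auto
          ultimately show False using xv[rule_format, of "x - {j}"] pjp by simp
        qed
        then show ?thesis using pj False unfolding y'_def by auto
      qed
    qed
  qed
qed



definition ptil :: "real \<Rightarrow> ('a \<Rightarrow> 'i set) \<Rightarrow> ('i \<Rightarrow> nat) \<Rightarrow> 'a \<Rightarrow> 'i \<Rightarrow> real" where
  "ptil \<epsilon> S c k l = \<epsilon> * real (c l) + (if l \<in> S k then 0 else \<epsilon>)"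

definition Inv :: "('a \<Rightarrow> 'i::finite set \<Rightarrow> real) \<Rightarrow> real \<Rightarrow> nat \<Rightarrow> ('a \<Rightarrow> 'i set) \<Rightarrow> ('i \<Rightarrow> nat) \<Rightarrow> bool" where
  "Inv b \<epsilon> N S c \<longleftrightarrow> (\<forall>k k' l. k \<noteq> k' \<longrightarrow> l \<in> S k \<longrightarrow> l \<notin> S k') \<and> (\<forall>l. (\<forall>k. l \<notin> S k) \<longrightarrow> c l = 0)
     \<and> (\<forall>l. c l \<le> N) \<and> (\<forall>k. \<exists>D\<in>demand (b k) (ptil \<epsilon> S c k). S k \<subseteq> D)"

lemma sum_indicator_card: "(\<Sum>l\<in>(UNIV::'i::finite set). (if l \<in> E then 1 else 0::nat)) = card E"
  by (simp add: sum.If_cases)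

lemma auction_step:
  fixes b :: "'a \<Rightarrow> 'i::finite set \<Rightarrow> real"
  assumes gs: "\<forall>k. GS (b k)" and eps: "0 < \<epsilon>" and hN: "\<forall>k. b k UNIV \<le> \<epsilon> * real N"
    and inv: "Inv b \<epsilon> N S c" and nf: "S k \<notin> demand (b k) (ptil \<epsilon> S c k)"
  shows "\<exists>S' c'. Inv b \<epsilon> N S' c' \<and> (\<Sum>l\<in>UNIV. c l) < (\<Sum>l\<in>UNIV. c' l)"
proof -
  have disj: "\<And>k k' l. k \<noteq> k' \<Longrightarrow> l \<in> S k \<Longrightarrow> l \<notin> S k'" using inv unfolding Inv_def by blast
  have un0: "\<And>l. (\<forall>k. l \<notin> S k) \<Longrightarrow> c l = 0" using inv unfolding Inv_def by blast
  have cN: "\<And>l. c l \<le> N" using inv unfolding Inv_def by blast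
  have dem: "\<And>k. \<exists>D\<in>demand (b k) (ptil \<epsilon> S c k). S k \<subseteq> D" using inv unfolding Inv_def by blast
  obtain D where Dd: "D \<in> demand (b k) (ptil \<epsilon> S c k)" and SD: "S k \<subseteq> D" using dem by blast
  have DS: "D \<noteq> S k" using Dd nf by blast
  define S' where "S' = (\<lambda>l. if l = k then D else S l - D)"
  define c' where "c' = (\<lambda>j. c j + (if j \<in> D - S k then 1 else 0::nat))"
  have ptk: "ptil \<epsilon> S' c' k = ptil \<epsilon> S c k"
    using SD by (auto simp: ptil_def S'_def c'_def fun_eq_iff algebra_simps)
  have ptle: "\<forall>j. 0 \<le> ptil \<epsilon> S c l j \<and> ptil \<epsilon> S c l j \<le> ptil \<epsilon> S' c' l j" if "l \<noteq> k" for l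
  proof
    fix j
    show "0 \<le> ptil \<epsilon> S c l j \<and> ptil \<epsilon> S c l j \<le> ptil \<epsilon> S' c' l j"
      using eps that disj[of l k j] by (auto simp: ptil_def S'_def c'_def algebra_simps)
  qed
  have pteq: "ptil \<epsilon> S c l j = ptil \<epsilon> S' c' l j" if "l \<noteq> k" "j \<in> S' l" for l j
    using that by (auto simp: ptil_def S'_def c'_def)
  have inv': "Inv b \<epsilon> N S' c'"
    unfolding Inv_def
  proof (intro conjI allI impI)
    fix k1 k2 l assume "k1 \<noteq> k2" "l \<in> S' k1"
    then show "l \<notin> S' k2" using disj[of k1 k2 l] by (auto simp: S'_def split: if_splits)
  next
    fix l assume "\<forall>k. l \<notin> S' k"
    then have "\<forall>k. l \<notin> S k" "l \<notin> D" using SD by (auto simp: S'_def split: if_splits)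
    then show "c' l = 0" using un0 by (simp add: c'_def)
  next
    fix l
    show "c' l \<le> N"
    proof (cases "l \<in> D - S k")
      case False then show ?thesis using cN by (auto simp: c'_def)
    next
      case True
      let ?pt = "ptil \<epsilon> S c k"
      have "b k (D - {l}) - (\<Sum>j\<in>D - {l}. ?pt j) \<le> b k D - (\<Sum>j\<in>D. ?pt j)"
        using Dd unfolding demand_def by blast
      moreover have "(\<Sum>j\<in>D. ?pt j) = ?pt l + (\<Sum>j\<in>D - {l}. ?pt j)" using True by (simp add: sum.remove)
      moreover have "0 \<le> b k (D - {l})" using gs GS_val val_nonneg by blast
      moreover have "b k D \<le> b k UNIV" using gs GS_val val_mono by blast
      moreover have "?pt l = \<epsilon> * real (c l + 1)" using True by (simp add: ptil_def algebra_simps)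
      ultimately have "\<epsilon> * real (c l + 1) \<le> \<epsilon> * real N" using hN[rule_format, of k] by linarith
      then have "c l + 1 \<le> N" using eps by (simp del: of_nat_add)
      then show ?thesis using True by (simp add: c'_def)
    qed
  next
    fix l
    show "\<exists>D'\<in>demand (b l) (ptil \<epsilon> S' c' l). S' l \<subseteq> D'"
    proof (cases "l = k")
      case True
      then show ?thesis using Dd ptk by (auto simp: S'_def)
    next
      case False
      obtain Dl where Dl: "Dl \<in> demand (b l) (ptil \<epsilon> S c l)" "S l \<subseteq> Dl" using dem by blast
      obtain y where yd: "y \<in> demand (b l) (ptil \<epsilon> S' c' l)"
        and yc: "\<forall>j. ptil \<epsilon> S c l j = ptil \<epsilon> S' c' l j \<longrightarrow> j \<in> Dl \<longrightarrow> j \<in> y"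
        using gs ptle[OF False] Dl(1) unfolding GS_def by blast
      have "S' l \<subseteq> y"
      proof
        fix j assume "j \<in> S' l"
        moreover then have "j \<in> S l" using False by (simp add: S'_def)
        ultimately show "j \<in> y" using yc pteq[OF False] Dl(2) by blast
      qed
      then show ?thesis using yd by blast
    qed
  qed
  have "(\<Sum>l\<in>UNIV. c' l) = (\<Sum>l\<in>UNIV. c l) + card (D - S k)"
    unfolding c'_def by (simp only: sum.distrib sum_indicator_card)
  moreover have "card (D - S k) > 0" using SD DS by (auto simp: card_gt_0_iff)
  ultimately have "(\<Sum>l\<in>UNIV. c l) < (\<Sum>l\<in>UNIV. c' l)" by linarith
  then show ?thesis using inv' by blast
qed



lemma auction_terminates:
  fixes b :: "'a \<Rightarrow> 'i::finite set \<Rightarrow> real"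
  assumes gs: "\<forall>k. GS (b k)" and eps: "0 < \<epsilon>" and hN: "\<forall>k. b k UNIV \<le> \<epsilon> * real N"
  shows "Inv b \<epsilon> N S c \<Longrightarrow> \<exists>S' c'. Inv b \<epsilon> N S' c' \<and> (\<forall>k. S' k \<in> demand (b k) (ptil \<epsilon> S' c' k))"
proof (induction "card (UNIV::'i set) * N - sum c UNIV" arbitrary: S c rule: less_induct)
  case less
  show ?case
  proof (cases "\<forall>k. S k \<in> demand (b k) (ptil \<epsilon> S c k)")
    case True then show ?thesis using less.prems by blast
  next
    case False
    then obtain k where "S k \<notin> demand (b k) (ptil \<epsilon> S c k)" by blast
    then obtain S' c' where inv': "Inv b \<epsilon> N S' c'" and lt: "sum c UNIV < sum c' UNIV"
      using auction_step[OF gs eps hN less.prems] by blast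
    have bnd: "sum c' UNIV \<le> card (UNIV::'i set) * N"
      using inv' sum_bounded_above[of UNIV c' N] unfolding Inv_def by (simp add: mult.commute)
    have "card (UNIV::'i set) * N - sum c' UNIV < card (UNIV::'i set) * N - sum c UNIV"
      using lt bnd by linarith
    then show ?thesis using less.hyps inv' by blast
  qed
qed

lemma eps_eq:
  fixes b :: "'a::finite \<Rightarrow> 'i::finite set \<Rightarrow> real"
  assumes gs: "\<forall>k. GS (b k)" and eps: "0 < \<epsilon>"
  shows "\<exists>S q. (\<forall>k k' l. k \<noteq> k' \<longrightarrow> l \<in> S k \<longrightarrow> l \<notin> S k') \<and> (\<forall>l. 0 \<le> q l)
     \<and> (\<forall>l. (\<forall>k. l \<notin> S k) \<longrightarrow> q l = 0)
     \<and> (\<forall>k T. b k T - (\<Sum>l\<in>T. q l) \<le> b k (S k) - (\<Sum>l\<in>S k. q l) + \<epsilon> * real (card T))"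
proof -
  define B where "B = (\<Sum>k\<in>UNIV. b k UNIV)"
  define N where "N = nat \<lceil>B / \<epsilon>\<rceil>"
  have bB: "b k UNIV \<le> B" for k
  proof -
    have "b k UNIV \<le> (\<Sum>k\<in>UNIV. b k UNIV)"
      by (rule member_le_sum) (use gs GS_val val_nonneg in auto)
    then show ?thesis by (simp add: B_def)
  qed
  have "B / \<epsilon> \<le> real N" unfolding N_def by linarith
  then have "B \<le> \<epsilon> * real N" using eps by (simp add: field_simps)
  then have hN: "\<forall>k. b k UNIV \<le> \<epsilon> * real N" using bB by (meson order.trans)
  have inv0: "Inv b \<epsilon> N (\<lambda>_. {}) (\<lambda>_. 0)"
    unfolding Inv_def using demand_ne by auto
  obtain S c where inv: "Inv b \<epsilon> N S c" and fin: "\<forall>k. S k \<in> demand (b k) (ptil \<epsilon> S c k)"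
    using auction_terminates[OF gs eps hN inv0] by blast
  define q where "q = (\<lambda>l. \<epsilon> * real (c l))"
  show ?thesis
  proof (intro exI[of _ S] exI[of _ q] conjI allI impI)
    show "\<And>k k' l. k \<noteq> k' \<Longrightarrow> l \<in> S k \<Longrightarrow> l \<notin> S k'" using inv unfolding Inv_def by blast
    show "\<And>l. 0 \<le> q l" using eps by (simp add: q_def)
    show "\<And>l. \<forall>k. l \<notin> S k \<Longrightarrow> q l = 0" using inv unfolding Inv_def q_def by simp
  next
    fix k T
    let ?pt = "ptil \<epsilon> S c k"
    have d: "b k T - (\<Sum>l\<in>T. ?pt l) \<le> b k (S k) - (\<Sum>l\<in>S k. ?pt l)"
      using fin unfolding demand_def by blast
    have e1: "(\<Sum>l\<in>S k. ?pt l) = (\<Sum>l\<in>S k. q l)" by (rule sum.cong) (auto simp: ptil_def q_def)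
    have "(\<Sum>l\<in>T. ?pt l) \<le> (\<Sum>l\<in>T. q l + \<epsilon>)" by (rule sum_mono) (use eps in \<open>auto simp: ptil_def q_def\<close>)
    also have "\<dots> = (\<Sum>l\<in>T. q l) + \<epsilon> * real (card T)" by (simp add: sum.distrib)
    finally show "b k T - (\<Sum>l\<in>T. q l) \<le> b k (S k) - (\<Sum>l\<in>S k. q l) + \<epsilon> * real (card T)"
      using d e1 by linarith
  qed
qed



lemma sum_swap_card:
  fixes U :: "'a::finite \<Rightarrow> 'i::finite set" and f :: "'i \<Rightarrow> real"
  shows "(\<Sum>k\<in>UNIV. \<Sum>l\<in>U k. f l) = (\<Sum>l\<in>UNIV. f l * real (card {k. l \<in> U k}))"
proof -
  have "(\<Sum>k\<in>UNIV. \<Sum>l\<in>U k. f l) = (\<Sum>k\<in>UNIV. \<Sum>l\<in>UNIV. if l \<in> U k then f l else 0)"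
    by (rule sum.cong) (auto simp: sum.If_cases Int_absorb1)
  also have "\<dots> = (\<Sum>l\<in>UNIV. \<Sum>k\<in>UNIV. if l \<in> U k then f l else 0)" by (rule sum.swap)
  also have "\<dots> = (\<Sum>l\<in>UNIV. f l * real (card {k. l \<in> U k}))"
    by (rule sum.cong) (auto simp: sum.If_cases Collect_conv_if mult.commute)
  finally show ?thesis .
qed

lemma W_ge:
  fixes b :: "'a::finite \<Rightarrow> 'i::finite set \<Rightarrow> real"
  assumes "\<forall>j. card {i. j \<in> S i} \<le> x j"
  shows "(\<Sum>i\<in>UNIV. b i (S i)) \<le> W b x"
  unfolding W_def by (rule Max_ge) (use assms in auto)

lemma W_attain:
  fixes b :: "'a::finite \<Rightarrow> 'i::finite set \<Rightarrow> real"
  shows "\<exists>S. (\<forall>j. card {i. j \<in> S i} \<le> x j) \<and> W b x = (\<Sum>i\<in>UNIV. b i (S i))"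
proof -
  let ?F = "{S :: 'a \<Rightarrow> 'i set. \<forall>j. card {i. j \<in> S i} \<le> x j}"
  have ne: "(\<lambda>_. {}) \<in> ?F" by simp
  have "Max ((\<lambda>S. \<Sum>i\<in>UNIV. b i (S i)) ` ?F) \<in> (\<lambda>S. \<Sum>i\<in>UNIV. b i (S i)) ` ?F"
    apply (rule Max_in)
     apply simp
    apply simp
    apply (rule exI[of _ "\<lambda>_. {}"])
    apply simp
    done
  then show ?thesis unfolding W_def by auto
qed

lemma part_card1: "is_partition Y \<Longrightarrow> card {i. j \<in> Y i} = 1"
proof -
  assume p: "is_partition Y"
  then obtain i where i: "j \<in> Y i" unfolding is_partition_def by blast
  have "{i. j \<in> Y i} = {i}" using p i unfolding is_partition_def by blast
  then show ?thesis by simp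
qed

lemma pack_card: "\<forall>k k' l. k \<noteq> k' \<longrightarrow> l \<in> S k \<longrightarrow> l \<notin> S k' \<Longrightarrow> card {i::'a::finite. l \<in> S i} \<le> 1"
proof -
  assume a: "\<forall>k k' l. k \<noteq> k' \<longrightarrow> l \<in> S k \<longrightarrow> l \<notin> S k'"
  have "card {i. l \<in> S i} \<le> Suc 0" by (subst card_le_Suc0_iff_eq) (use a in auto)
  then show ?thesis by simp
qed

lemma card_pack: "card {i::'a::finite. l \<in> S i} \<le> 1 \<Longrightarrow> l \<in> S k \<Longrightarrow> l \<in> S k' \<Longrightarrow> k = k'"
  using card_le_Suc0_iff_eq[of "{i. l \<in> S i}"] by auto

lemma extend_pack:
  fixes b :: "'a::finite \<Rightarrow> 'i::finite set \<Rightarrow> real"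
  assumes val: "\<forall>k. valuation (b k)" and pk: "\<forall>l. card {i. l \<in> U i} \<le> 1"
  shows "\<exists>U'. is_partition U' \<and> (\<Sum>i\<in>UNIV. b i (U i)) \<le> (\<Sum>i\<in>UNIV. b i (U' i))"
proof -
  define i0 where "i0 = (undefined::'a)"
  define U' where "U' = (\<lambda>i. if i = i0 then U i \<union> (UNIV - (\<Union>k. U k)) else U i)"
  have "is_partition U'"
    unfolding is_partition_def
  proof (intro conjI allI impI)
    fix i k :: 'a assume "i \<noteq> k"
    then show "U' i \<inter> U' k = {}" using card_pack[OF pk[rule_format]] unfolding U'_def by auto
  next
    show "(\<Union>i. U' i) = UNIV" unfolding U'_def by auto
  qed
  moreover have "(\<Sum>i\<in>UNIV. b i (U i)) \<le> (\<Sum>i\<in>UNIV. b i (U' i))"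
    by (rule sum_mono) (use val in \<open>auto simp: U'_def intro: val_mono\<close>)
  ultimately show ?thesis by blast
qed

lemma W_opt:
  fixes b :: "'a::finite \<Rightarrow> 'i::finite set \<Rightarrow> real"
  assumes val: "\<forall>k. valuation (b k)" and opt: "optimal_partition b Y"
  shows "W b (\<lambda>_. 1) = (\<Sum>i\<in>UNIV. b i (Y i))"
proof -
  have p: "is_partition Y" using opt unfolding optimal_partition_def by blast
  obtain U where U: "\<forall>j. card {i. j \<in> U i} \<le> 1" "W b (\<lambda>_. 1) = (\<Sum>i\<in>UNIV. b i (U i))"
    using W_attain[where b=b and x="\<lambda>_. 1"] by auto
  obtain U' where "is_partition U'" "(\<Sum>i\<in>UNIV. b i (U i)) \<le> (\<Sum>i\<in>UNIV. b i (U' i))"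
    using extend_pack[OF val U(1)] by blast
  then have "W b (\<lambda>_. 1) \<le> (\<Sum>i\<in>UNIV. b i (Y i))" using opt U(2) unfolding optimal_partition_def by force
  moreover have "(\<Sum>i\<in>UNIV. b i (Y i)) \<le> W b (\<lambda>_. 1)" by (rule W_ge) (simp add: part_card1[OF p])
  ultimately show ?thesis by linarith
qed



lemma key_eps:
  fixes b :: "'a::finite \<Rightarrow> 'i::finite set \<Rightarrow> real"
  assumes gs: "\<forall>k. GS (b k)" and opt: "optimal_partition b Y" and eps: "0 < \<epsilon>"
  shows "(\<Sum>j\<in>Y i. min_price b j) \<le> b i (Y i)
           + \<epsilon> * (real (card (UNIV::'a set) * card (UNIV::'i set)) + real (card (UNIV::'i set)) * real (card (UNIV::'a set) * card (UNIV::'i set)))"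
proof -
  let ?nm = "real (card (UNIV::'a set) * card (UNIV::'i set))"
  let ?m = "real (card (UNIV::'i set))"
  have val: "\<forall>k. valuation (b k)" using gs GS_val by blast
  have part: "is_partition Y" using opt unfolding optimal_partition_def by blast
  obtain S q where disj: "\<forall>k k' l. k \<noteq> k' \<longrightarrow> l \<in> S k \<longrightarrow> l \<notin> S k'" and q0: "\<forall>l. 0 \<le> q l"
    and un0: "\<forall>l. (\<forall>k. l \<notin> S k) \<longrightarrow> q l = 0"
    and ee: "\<forall>k T. b k T - (\<Sum>l\<in>T. q l) \<le> b k (S k) - (\<Sum>l\<in>S k. q l) + \<epsilon> * real (card T)"
    using eps_eq[OF gs eps] by blast
  have pS: "\<forall>l. card {k. l \<in> S k} \<le> 1" using pack_card[OF disj] by blast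
  have qS: "(\<Sum>k\<in>UNIV. \<Sum>l\<in>S k. q l) = (\<Sum>l\<in>UNIV. q l)"
  proof -
    have ql: "q l * real (card {k. l \<in> S k}) = q l" for l
    proof (cases "card {k. l \<in> S k} = 0")
      case True
      then have "\<forall>k. l \<notin> S k" by simp
      then show ?thesis using un0 by simp
    next
      case False
      then have "card {k. l \<in> S k} = 1" using pS[rule_format, of l] by linarith
      then show ?thesis by simp
    qed
    show ?thesis by (simp only: sum_swap_card ql)
  qed
  have qY: "(\<Sum>k\<in>UNIV. \<Sum>l\<in>Y k. q l) = (\<Sum>l\<in>UNIV. q l)"
    by (simp add: sum_swap_card part_card1[OF part])
  define bS where "bS = (\<Sum>k\<in>UNIV. b k (S k))"
  have bound: "(\<Sum>k\<in>UNIV. b k (U k)) \<le> bS - (\<Sum>l\<in>UNIV. q l) + (\<Sum>l\<in>UNIV. q l * real (x l)) + \<epsilon> * ?nm"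
    if U: "\<forall>l. card {k. l \<in> U k} \<le> x l" for U x
  proof -
    have eeU: "b k (U k) \<le> b k (S k) - (\<Sum>l\<in>S k. q l) + (\<Sum>l\<in>U k. q l) + \<epsilon> * real (card (U k))" for k
      using ee[rule_format, of k "U k"] by linarith
    have "(\<Sum>k\<in>UNIV. b k (U k)) \<le> (\<Sum>k\<in>UNIV. b k (S k) - (\<Sum>l\<in>S k. q l) + (\<Sum>l\<in>U k. q l) + \<epsilon> * real (card (U k)))"
      by (rule sum_mono) (rule eeU)
    also have "\<dots> = bS - (\<Sum>k\<in>UNIV. \<Sum>l\<in>S k. q l) + (\<Sum>k\<in>UNIV. \<Sum>l\<in>U k. q l) + \<epsilon> * (\<Sum>k\<in>UNIV. real (card (U k)))"
      by (simp add: bS_def sum.distrib sum_subtractf sum_distrib_left)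
    also have "(\<Sum>k\<in>UNIV. \<Sum>l\<in>U k. q l) \<le> (\<Sum>l\<in>UNIV. q l * real (x l))"
      unfolding sum_swap_card by (rule sum_mono) (use U q0 in \<open>auto intro: mult_left_mono\<close>)
    also have "(\<Sum>k\<in>UNIV. real (card (U k))) \<le> ?nm"
    proof -
      have "(\<Sum>k\<in>UNIV. real (card (U k))) \<le> of_nat (card (UNIV::'a set)) * ?m"
        by (rule sum_bounded_above) (simp add: card_mono)
      then show ?thesis by simp
    qed
    finally show ?thesis using eps qS by simp
  qed
  have W1: "bS \<le> W b (\<lambda>_. 1)" unfolding bS_def by (rule W_ge) (use pS in simp)
  have mp: "min_price b j \<le> q j + \<epsilon> * ?nm" for j
  proof -
    obtain U where U: "\<forall>l. card {k. l \<in> U k} \<le> 1 + (if l = j then 1 else 0)"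
      "W b (\<lambda>l. 1 + (if l = j then 1 else 0)) = (\<Sum>k\<in>UNIV. b k (U k))"
      using W_attain[where b=b and x="\<lambda>l. 1 + (if l = j then 1 else 0)"] by blast
    have "(\<Sum>l\<in>UNIV. q l * real (1 + (if l = j then 1 else 0))) = (\<Sum>l\<in>UNIV. q l + (if l = j then q l else 0))"
      by (rule sum.cong) auto
    also have "\<dots> = (\<Sum>l\<in>UNIV. q l) + q j" by (simp add: sum.distrib)
    finally have "W b (\<lambda>l. 1 + (if l = j then 1 else 0)) \<le> bS + q j + \<epsilon> * ?nm"
      using bound[OF U(1)] U(2) by simp
    then show ?thesis unfolding min_price_def using W1 by simp
  qed
  have s1: "(\<Sum>j\<in>Y i. min_price b j) \<le> (\<Sum>l\<in>Y i. q l) + ?m * (\<epsilon> * ?nm)"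
  proof -
    have "(\<Sum>j\<in>Y i. min_price b j) \<le> (\<Sum>j\<in>Y i. q j + \<epsilon> * ?nm)" by (rule sum_mono) (rule mp)
    also have "\<dots> = (\<Sum>l\<in>Y i. q l) + real (card (Y i)) * (\<epsilon> * ?nm)" by (simp add: sum.distrib)
    also have "real (card (Y i)) * (\<epsilon> * ?nm) \<le> ?m * (\<epsilon> * ?nm)"
      by (rule mult_right_mono) (use eps in \<open>auto simp: card_mono\<close>)
    finally show ?thesis by simp
  qed
  define g where "g k = b k (Y k) - (\<Sum>l\<in>Y k. q l)" for k
  define h where "h k = b k (S k) - (\<Sum>l\<in>S k. q l)" for k
  have sgh: "(\<Sum>k\<in>UNIV. h k) \<le> (\<Sum>k\<in>UNIV. g k)"
  proof -
    have "(\<Sum>k\<in>UNIV. g k) = W b (\<lambda>_. 1) - (\<Sum>l\<in>UNIV. q l)"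
      unfolding g_def sum_subtractf W_opt[OF val opt] qY ..
    moreover have "(\<Sum>k\<in>UNIV. h k) = bS - (\<Sum>l\<in>UNIV. q l)"
      unfolding h_def sum_subtractf bS_def qS ..
    ultimately show ?thesis using W1 by simp
  qed
  have gh: "g k \<le> h k + \<epsilon> * ?m" for k
  proof -
    have "g k \<le> h k + \<epsilon> * real (card (Y k))" using ee unfolding g_def h_def by force
    moreover have "\<epsilon> * real (card (Y k)) \<le> \<epsilon> * ?m" using eps by (simp add: card_mono)
    ultimately show ?thesis by simp
  qed
  have "b i {} = 0" using val val_empty by blast
  then have hi: "0 \<le> h i" using ee[rule_format, of i "{}"] unfolding h_def by simp
  have "(\<Sum>k\<in>UNIV - {i}. g k) \<le> (\<Sum>k\<in>UNIV - {i}. h k + \<epsilon> * ?m)" by (rule sum_mono) (rule gh)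
  also have "\<dots> = (\<Sum>k\<in>UNIV - {i}. h k) + real (card (UNIV - {i} :: 'a set)) * (\<epsilon> * ?m)"
    by (simp add: sum.distrib)
  also have "real (card (UNIV - {i} :: 'a set)) * (\<epsilon> * ?m) \<le> real (card (UNIV::'a set)) * (\<epsilon> * ?m)"
    by (rule mult_right_mono) (use eps in \<open>auto simp: card_mono\<close>)
  finally have "(\<Sum>k\<in>UNIV - {i}. g k) \<le> (\<Sum>k\<in>UNIV - {i}. h k) + real (card (UNIV::'a set)) * (\<epsilon> * ?m)" by simp
  moreover have "(\<Sum>k\<in>UNIV. g k) = g i + (\<Sum>k\<in>UNIV - {i}. g k)" by (simp add: sum.remove)
  moreover have "(\<Sum>k\<in>UNIV. h k) = h i + (\<Sum>k\<in>UNIV - {i}. h k)" by (simp add: sum.remove)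
  ultimately have "- (real (card (UNIV::'a set)) * (\<epsilon> * ?m)) \<le> g i" using sgh hi by linarith
  then have "(\<Sum>l\<in>Y i. q l) \<le> b i (Y i) + \<epsilon> * ?nm" unfolding g_def by (simp add: algebra_simps)
  then show ?thesis using s1 by (simp add: algebra_simps)
qed

lemma key:
  fixes b :: "'a::finite \<Rightarrow> 'i::finite set \<Rightarrow> real"
  assumes gs: "\<forall>k. GS (b k)" and opt: "optimal_partition b Y"
  shows "(\<Sum>j\<in>Y i. min_price b j) \<le> b i (Y i)"
proof (rule field_le_epsilon)
  fix e :: real assume e: "0 < e"
  define C where "C = real (card (UNIV::'a set) * card (UNIV::'i set)) + real (card (UNIV::'i set)) * real (card (UNIV::'a set) * card (UNIV::'i set))"
  have C0: "0 \<le> C" unfolding C_def by simp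
  have ep: "0 < e / (C + 1)" using e C0 by simp
  have "(\<Sum>j\<in>Y i. min_price b j) \<le> b i (Y i) + (e / (C + 1)) * C"
    using key_eps[OF gs opt ep, of i] unfolding C_def by simp
  moreover have "(e / (C + 1)) * C \<le> e" using e C0 by (simp add: field_simps)
  ultimately show "(\<Sum>j\<in>Y i. min_price b j) \<le> b i (Y i) + e" by simp
qed



lemma sum_diff_outside:
  fixes f g :: "'a::finite \<Rightarrow> real"
  assumes "\<forall>k. k \<notin> K \<longrightarrow> f k = g k"
  shows "(\<Sum>k\<in>UNIV. f k) = (\<Sum>k\<in>UNIV. g k) + (\<Sum>k\<in>K. f k - g k)"
proof -
  have "(\<Sum>k\<in>UNIV. f k - g k) = (\<Sum>k\<in>K. f k - g k)"
    by (rule sum.mono_neutral_right) (use assms in auto)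
  then show ?thesis by (simp add: sum_subtractf)
qed

lemma min_price_nonneg:
  fixes b :: "'a::finite \<Rightarrow> 'i::finite set \<Rightarrow> real"
  shows "0 \<le> min_price b j"
proof -
  obtain T where T: "\<forall>l. card {k. l \<in> T k} \<le> 1" "W b (\<lambda>_. 1) = (\<Sum>k\<in>UNIV. b k (T k))"
    using W_attain[where b=b and x="\<lambda>_. 1"] by blast
  have "(\<Sum>k\<in>UNIV. b k (T k)) \<le> W b (\<lambda>l. 1 + (if l = j then 1 else 0))"
    by (rule W_ge) (use T(1) in \<open>auto intro: le_trans\<close>)
  then show ?thesis using T(2) unfolding min_price_def by simp
qed

lemma opt_partition_exists:
  fixes v :: "'a::finite \<Rightarrow> 'i::finite set \<Rightarrow> real"
  shows "\<exists>A. optimal_partition v A"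
proof -
  define i0 where "i0 = (undefined :: 'a)"
  let ?P = "{Y :: 'a \<Rightarrow> 'i set. is_partition Y}"
  have "(\<lambda>i. if i = i0 then UNIV else {}) \<in> ?P" unfolding is_partition_def by auto
  then have "?P \<noteq> {}" by blast
  then obtain A where "A \<in> ?P" "\<forall>Y\<in>?P. (\<Sum>i\<in>UNIV. v i (Y i)) \<le> (\<Sum>i\<in>UNIV. v i (A i))"
    using finite_argmax[of ?P "\<lambda>Y. \<Sum>i\<in>UNIV. v i (Y i)"] by auto
  then show ?thesis unfolding optimal_partition_def by auto
qed

lemma restricted_price:
  fixes v :: "'a::finite \<Rightarrow> 'i::finite set \<Rightarrow> real"
  assumes val: "\<forall>k. valuation (v k)" and pA: "is_partition A"
  shows "min_price (\<lambda>k S. v k (S \<inter> A k)) j \<le> 0"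
proof -
  let ?b = "\<lambda>k S. v k (S \<inter> A k)"
  obtain T where T: "W ?b (\<lambda>l. 1 + (if l = j then 1 else 0)) = (\<Sum>k\<in>UNIV. ?b k (T k))"
    using W_attain[where b="?b" and x="\<lambda>l. 1 + (if l = j then 1 else 0)"] by blast
  have "(\<Sum>k\<in>UNIV. ?b k (T k)) \<le> (\<Sum>k\<in>UNIV. ?b k (A k))"
    by (rule sum_mono) (use val in \<open>auto intro: val_mono\<close>)
  moreover have "(\<Sum>k\<in>UNIV. ?b k (A k)) \<le> W ?b (\<lambda>_. 1)"
    by (rule W_ge) (simp add: part_card1[OF pA])
  ultimately show ?thesis using T unfolding min_price_def by simp
qed

lemma restricted_alloc:
  fixes v :: "'a::finite \<Rightarrow> 'i::finite set \<Rightarrow> real"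
  assumes val: "\<forall>k. valuation (v k)" and pA: "is_partition A"
    and opt: "optimal_partition (\<lambda>k S. v k (S \<inter> A k)) Y"
  shows "v i (A i) \<le> v i (Y i)"
proof -
  have le: "v k (Y k \<inter> A k) \<le> v k (A k)" for k using val by (auto intro: val_mono)
  have "(\<Sum>k\<in>UNIV. v k (A k \<inter> A k)) \<le> (\<Sum>k\<in>UNIV. v k (Y k \<inter> A k))"
    using opt pA unfolding optimal_partition_def by blast
  then have "(\<Sum>k\<in>UNIV. v k (A k) - v k (Y k \<inter> A k)) \<le> 0" by (simp add: sum_subtractf)
  moreover have "v i (A i) - v i (Y i \<inter> A i) \<le> (\<Sum>k\<in>UNIV. v k (A k) - v k (Y k \<inter> A k))"
    by (rule member_le_sum) (use le in auto)
  moreover have "v i (Y i \<inter> A i) \<le> v i (Y i)" using val by (auto intro: val_mono)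
  ultimately show ?thesis by linarith
qed



lemma part_unique: "is_partition Y \<Longrightarrow> j \<in> Y k \<Longrightarrow> j \<in> Y l \<Longrightarrow> k = l"
  unfolding is_partition_def by blast

lemma part_ex: "is_partition Y \<Longrightarrow> \<exists>l. j \<in> Y l"
  unfolding is_partition_def by blast

lemma deviation:
  fixes v :: "'a::finite \<Rightarrow> 'i::finite set \<Rightarrow> real"
  assumes gsv: "\<forall>k. GS (v k)" and Aopt: "optimal_partition v A" and vb: "valuation bi'"
    and Yopt: "optimal_partition ((\<lambda>k S. v k (S \<inter> A k))(i := bi')) Y"
  shows "v i (Y i) - (\<Sum>j\<in>Y i. min_price ((\<lambda>k S. v k (S \<inter> A k))(i := bi')) j) \<le> v i (A i)"
proof -
  define b' where "b' = (\<lambda>k S. v k (S \<inter> A k))(i := bi')"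
  define p where "p j = min_price b' j" for j
  define C where "C k = Y k \<inter> A k" for k
  have val: "\<forall>k. valuation (v k)" using gsv GS_val by blast
  have pA: "is_partition A" using Aopt unfolding optimal_partition_def by blast
  have Yopt': "optimal_partition b' Y" using Yopt unfolding b'_def .
  have pY: "is_partition Y" using Yopt unfolding optimal_partition_def by blast
  have val': "\<forall>k. valuation (b' k)"
  proof
    fix k show "valuation (b' k)"
    proof (cases "k = i")
      case True then show ?thesis using vb by (simp add: b'_def)
    next
      case False
      have "GS (\<lambda>S. v k (S \<inter> A k))" using gsv GS_restrict by blast
      then show ?thesis using False GS_val by (simp add: b'_def)
    qed
  qed
  have b'k: "k \<noteq> i \<Longrightarrow> b' k S = v k (S \<inter> A k)" for k S by (simp add: b'_def)
  have p0: "0 \<le> p j" for j unfolding p_def by (rule min_price_nonneg)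
  have WY: "W b' (\<lambda>_. 1) = (\<Sum>k\<in>UNIV. b' k (Y k))" by (rule W_opt[OF val' Yopt'])
  have P1: "v k (C k \<union> {j}) - v k (C k) \<le> p j" if ki: "k \<noteq> i" and jY: "j \<in> Y i" and jA: "j \<in> A k" for k j
  proof -
    define U where "U = Y(k := Y k \<union> {j})"
    have feas: "\<forall>l. card {k'. l \<in> U k'} \<le> 1 + (if l = j then 1 else 0)"
    proof
      fix l
      have sub: "{k'. l \<in> U k'} \<subseteq> {k'. l \<in> Y k'} \<union> (if l = j then {k} else {})"
        unfolding U_def by auto
      have "card {k'. l \<in> U k'} \<le> card ({k'. l \<in> Y k'} \<union> (if l = j then {k} else {}))"
        by (rule card_mono[OF _ sub]) simp
      also have "\<dots> \<le> card {k'. l \<in> Y k'} + card (if l = j then {k} else {})" by (rule card_Un_le)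
      also have "\<dots> \<le> 1 + (if l = j then 1 else 0)" using part_card1[OF pY, of l] by simp
      finally show "card {k'. l \<in> U k'} \<le> 1 + (if l = j then 1 else 0)" .
    qed
    have "(\<Sum>k'\<in>UNIV. b' k' (U k')) = (\<Sum>k'\<in>UNIV. b' k' (Y k')) + (\<Sum>k'\<in>{k}. b' k' (U k') - b' k' (Y k'))"
      by (rule sum_diff_outside) (simp add: U_def)
    moreover have "b' k (U k) = v k (C k \<union> {j})" using ki jA by (simp add: U_def b'k C_def Int_Un_distrib2)
    moreover have "b' k (Y k) = v k (C k)" using ki by (simp add: b'k C_def)
    moreover have "(\<Sum>k'\<in>UNIV. b' k' (U k')) \<le> W b' (\<lambda>l. 1 + (if l = j then 1 else 0))"
      by (rule W_ge[OF feas])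
    ultimately show ?thesis using WY unfolding p_def min_price_def by simp
  qed
  have P2: "v k (C k \<union> {j}) \<le> v k (C k)"
    if ki: "k \<noteq> i" and li: "l \<noteq> i" and lk: "l \<noteq> k" and jY: "j \<in> Y l" and jA: "j \<in> A k" for k l j
  proof -
    define U where "U = Y(l := Y l - {j}, k := Y k \<union> {j})"
    have pU: "is_partition U"
      unfolding is_partition_def
    proof (intro conjI allI impI)
      fix k1 k2 :: 'a assume "k1 \<noteq> k2"
      then show "U k1 \<inter> U k2 = {}"
        using pY jY lk unfolding U_def is_partition_def by auto
    next
      show "(\<Union>k'. U k') = UNIV"
      proof -
        have "x \<in> (\<Union>k'. U k')" for x
        proof -
          obtain m where "x \<in> Y m" using part_ex[OF pY] by blast
          then show ?thesis unfolding U_def by (cases "m = k"; cases "m = l"; cases "x = j") auto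
        qed
        then show ?thesis by blast
      qed
    qed
    have jAl: "j \<notin> A l" using part_unique[OF pA] jA lk by blast
    have "(\<Sum>k'\<in>UNIV. b' k' (U k')) = (\<Sum>k'\<in>UNIV. b' k' (Y k')) + (\<Sum>k'\<in>{k,l}. b' k' (U k') - b' k' (Y k'))"
      by (rule sum_diff_outside) (simp add: U_def)
    moreover have "(\<Sum>k'\<in>{k,l}. b' k' (U k') - b' k' (Y k')) = (b' k (U k) - b' k (Y k)) + (b' l (U l) - b' l (Y l))"
      using lk by simp
    moreover have "b' k (U k) = v k (C k \<union> {j})" using ki jA by (simp add: U_def b'k C_def Int_Un_distrib2)
    moreover have "b' k (Y k) = v k (C k)" using ki by (simp add: b'k C_def)
    moreover have "b' l (U l) = b' l (Y l)"
    proof -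
      have "(Y l - {j}) \<inter> A l = Y l \<inter> A l" using jAl by auto
      then show ?thesis using li lk by (simp add: U_def b'k)
    qed
    moreover have "(\<Sum>k'\<in>UNIV. b' k' (U k')) \<le> (\<Sum>k'\<in>UNIV. b' k' (Y k'))"
      using Yopt' pU unfolding optimal_partition_def by blast
    ultimately show ?thesis by simp
  qed
  have P3: "v k (A k) - v k (C k) \<le> (\<Sum>j\<in>A k \<inter> Y i. p j)" if ki: "k \<noteq> i" for k
  proof -
    have AC: "A k = C k \<union> (A k - C k)" unfolding C_def by auto
    have "v k (C k \<union> (A k - C k)) - v k (C k) \<le> (\<Sum>j\<in>A k - C k. v k (C k \<union> {j}) - v k (C k))"
      by (rule GS_marg_sum) (use gsv in auto)
    also have "\<dots> \<le> (\<Sum>j\<in>A k - C k. if j \<in> Y i then p j else 0)"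
    proof (rule sum_mono)
      fix j assume j: "j \<in> A k - C k"
      obtain l where jl: "j \<in> Y l" using part_ex[OF pY] by blast
      have lk: "l \<noteq> k" using j jl unfolding C_def by auto
      show "v k (C k \<union> {j}) - v k (C k) \<le> (if j \<in> Y i then p j else 0)"
      proof (cases "l = i")
        case True
        then show ?thesis using P1[OF ki _, of j] j jl by auto
      next
        case False
        then have "j \<notin> Y i" using part_unique[OF pY] jl by blast
        then show ?thesis using P2[OF ki False lk jl] j by simp
      qed
    qed
    also have "\<dots> = (\<Sum>j\<in>(A k - C k) \<inter> Y i. p j)" by (simp add: sum.inter_restrict)
    also have "(A k - C k) \<inter> Y i = A k \<inter> Y i"
      using part_unique[OF pY] ki unfolding C_def by blast
    finally show ?thesis using AC by simp
  qed
  have P4: "(\<Sum>k\<in>UNIV - {i}. \<Sum>j\<in>A k \<inter> Y i. p j) \<le> (\<Sum>j\<in>Y i. p j)"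
  proof -
    define U where "U k = (if k = i then {} else A k \<inter> Y i)" for k
    have "(\<Sum>k\<in>UNIV. \<Sum>j\<in>U k. p j) = (\<Sum>j\<in>U i. p j) + (\<Sum>k\<in>UNIV - {i}. \<Sum>j\<in>U k. p j)"
      by (simp add: sum.remove)
    also have "\<dots> = (\<Sum>k\<in>UNIV - {i}. \<Sum>j\<in>A k \<inter> Y i. p j)" by (simp add: U_def)
    finally have e1: "(\<Sum>k\<in>UNIV - {i}. \<Sum>j\<in>A k \<inter> Y i. p j) = (\<Sum>l\<in>UNIV. p l * real (card {k. l \<in> U k}))"
      by (simp add: sum_swap_card)
    have "(\<Sum>l\<in>UNIV. p l * real (card {k. l \<in> U k})) \<le> (\<Sum>l\<in>UNIV. if l \<in> Y i then p l else 0)"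
    proof (rule sum_mono)
      fix l
      show "p l * real (card {k. l \<in> U k}) \<le> (if l \<in> Y i then p l else 0)"
      proof (cases "l \<in> Y i")
        case True
        have "card {k. l \<in> U k} \<le> card {k. l \<in> A k}" by (rule card_mono) (auto simp: U_def)
        then have "card {k. l \<in> U k} \<le> 1" using part_card1[OF pA] by simp
        then show ?thesis using True p0[of l] by (simp add: mult_left_le)
      next
        case False
        then have "{k. l \<in> U k} = {}" by (auto simp: U_def)
        then show ?thesis using False by simp
      qed
    qed
    also have "\<dots> = (\<Sum>j\<in>Y i. p j)" by (simp add: sum.If_cases)
    finally show ?thesis using e1 by simp
  qed
  define Z where "Z k = (if k = i then UNIV - (\<Union>k'\<in>UNIV - {i}. C k') else C k)" for k
  have pZ: "is_partition Z"
    unfolding is_partition_def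
  proof (intro conjI allI impI)
    fix k1 k2 :: 'a assume "k1 \<noteq> k2"
    then show "Z k1 \<inter> Z k2 = {}"
      using part_unique[OF pY] unfolding Z_def C_def by auto
  next
    show "(\<Union>k. Z k) = UNIV" unfolding Z_def by auto
  qed
  have YZ: "Y i \<subseteq> Z i" using part_unique[OF pY] unfolding Z_def C_def by auto
  have "(\<Sum>k\<in>UNIV. v k (Z k)) \<le> (\<Sum>k\<in>UNIV. v k (A k))"
    using Aopt pZ unfolding optimal_partition_def by blast
  moreover have "(\<Sum>k\<in>UNIV. v k (Z k)) = v i (Z i) + (\<Sum>k\<in>UNIV - {i}. v k (C k))"
  proof -
    have "(\<Sum>k\<in>UNIV. v k (Z k)) = v i (Z i) + (\<Sum>k\<in>UNIV - {i}. v k (Z k))"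
      by (rule sum.remove) auto
    moreover have "(\<Sum>k\<in>UNIV - {i}. v k (Z k)) = (\<Sum>k\<in>UNIV - {i}. v k (C k))"
      by (rule sum.cong) (auto simp: Z_def)
    ultimately show ?thesis by simp
  qed
  moreover have "(\<Sum>k\<in>UNIV. v k (A k)) = v i (A i) + (\<Sum>k\<in>UNIV - {i}. v k (A k))"
    by (simp add: sum.remove)
  moreover have "(\<Sum>k\<in>UNIV - {i}. v k (A k) - v k (C k)) \<le> (\<Sum>k\<in>UNIV - {i}. \<Sum>j\<in>A k \<inter> Y i. p j)"
    by (rule sum_mono) (use P3 in auto)
  moreover have "v i (Y i) \<le> v i (Z i)" using val YZ by (auto intro: val_mono)
  ultimately have "v i (Y i) - (\<Sum>j\<in>Y i. p j) \<le> v i (A i)"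
    using P4 by (simp add: sum_subtractf)
  then show ?thesis unfolding p_def b'_def .
qed



lemma main_nash:
  fixes v :: "'agent::finite \<Rightarrow> 'item::finite set \<Rightarrow> real"
    and X :: "('agent \<Rightarrow> 'item set \<Rightarrow> real) \<Rightarrow> 'agent \<Rightarrow> 'item set"
  assumes gsv: "\<forall>i. GS (v i)" and ew: "EW_allocation_rule X" and Aopt: "optimal_partition v A"
  shows "pure_nash X v (\<lambda>k S. v k (S \<inter> A k))"
proof -
  have val: "\<forall>k. valuation (v k)" using gsv GS_val by blast
  have pA: "is_partition A" using Aopt unfolding optimal_partition_def by blast
  define b where "b = (\<lambda>k S. v k (S \<inter> A k))"
  have gsb: "\<forall>k. GS (b k)" unfolding b_def using gsv GS_restrict by blast
  have Xb: "optimal_partition b (X b)" using ew gsb unfolding EW_allocation_rule_def by blast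
  have Xbi: "v i (A i) \<le> v i (X b i)" for i
    using restricted_alloc[OF val pA] Xb unfolding b_def by blast
  have pay0: "payment X b i \<le> 0" for i
    unfolding payment_def
    by (rule sum_nonpos) (use restricted_price[OF val pA] in \<open>simp add: b_def\<close>)
  have ub: "v i (A i) \<le> utility X (v i) b i" for i
    using Xbi[of i] pay0[of i] unfolding utility_def by simp
  have "pure_nash X v b"
    unfolding pure_nash_def
  proof (intro conjI allI impI)
    show "\<And>i. GS (b i)" using gsb by blast
  next
    fix i and bi' :: "'item set \<Rightarrow> real" assume gbi: "GS bi'"
    have gs': "\<forall>k. GS ((b(i := bi')) k)" using gsb gbi by simp
    have Yopt: "optimal_partition (b(i := bi')) (X (b(i := bi')))"
      using ew gs' unfolding EW_allocation_rule_def by blast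
    have "utility X (v i) (b(i := bi')) i \<le> v i (A i)"
      using deviation[OF gsv Aopt GS_val[OF gbi], of i] Yopt
      unfolding utility_def payment_def b_def by blast
    then show "utility X (v i) (b(i := bi')) i \<le> utility X (v i) b i" using ub[of i] by simp
  qed
  then show ?thesis unfolding b_def .
qed

lemma main_optv:
  fixes v :: "'agent::finite \<Rightarrow> 'item::finite set \<Rightarrow> real"
    and X :: "('agent \<Rightarrow> 'item set \<Rightarrow> real) \<Rightarrow> 'agent \<Rightarrow> 'item set"
  assumes gsv: "\<forall>i. GS (v i)" and ew: "EW_allocation_rule X" and Aopt: "optimal_partition v A"
  shows "optimal_partition v (X (\<lambda>k S. v k (S \<inter> A k)))"
proof -
  have val: "\<forall>k. valuation (v k)" using gsv GS_val by blast
  have pA: "is_partition A" using Aopt unfolding optimal_partition_def by blast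
  define b where "b = (\<lambda>k S. v k (S \<inter> A k))"
  have gsb: "\<forall>k. GS (b k)" unfolding b_def using gsv GS_restrict by blast
  have Xb: "optimal_partition b (X b)" using ew gsb unfolding EW_allocation_rule_def by blast
  have Xbi: "v i (A i) \<le> v i (X b i)" for i
    using restricted_alloc[OF val pA] Xb unfolding b_def by blast
  have "optimal_partition v (X b)"
    unfolding optimal_partition_def
  proof (intro conjI allI impI)
    show "is_partition (X b)" using Xb unfolding optimal_partition_def by blast
  next
    fix Y :: "'agent \<Rightarrow> 'item set" assume pY: "is_partition Y"
    have "(\<Sum>i\<in>UNIV. v i (Y i)) \<le> (\<Sum>i\<in>UNIV. v i (A i))" using Aopt pY unfolding optimal_partition_def by blast
    also have "\<dots> \<le> (\<Sum>i\<in>UNIV. v i (X b i))" by (rule sum_mono) (rule Xbi)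
    finally show "(\<Sum>i\<in>UNIV. v i (Y i)) \<le> (\<Sum>i\<in>UNIV. v i (X b i))" .
  qed
  then show ?thesis unfolding b_def .
qed

lemma main_nonexp:
  fixes v :: "'agent::finite \<Rightarrow> 'item::finite set \<Rightarrow> real"
    and X :: "('agent \<Rightarrow> 'item set \<Rightarrow> real) \<Rightarrow> 'agent \<Rightarrow> 'item set"
  assumes gsv: "\<forall>i. GS (v i)" and ew: "EW_allocation_rule X"
  shows "non_exposure X (v i) i (\<lambda>S. v i (S \<inter> A i))"
  unfolding non_exposure_def
proof (intro allI impI)
  have val: "\<forall>k. valuation (v k)" using gsv GS_val by blast
  fix b' :: "'agent \<Rightarrow> 'item set \<Rightarrow> real" assume gb': "\<forall>k. k \<noteq> i \<longrightarrow> GS (b' k)"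
  let ?bi = "\<lambda>S. v i (S \<inter> A i)"
  have gsbi: "GS ?bi" using gsv GS_restrict by blast
  have gs'': "\<forall>k. GS ((b'(i := ?bi)) k)" using gb' gsbi by simp
  have Yopt: "optimal_partition (b'(i := ?bi)) (X (b'(i := ?bi)))"
    using ew gs'' unfolding EW_allocation_rule_def by blast
  have "payment X (b'(i := ?bi)) i \<le> (b'(i := ?bi)) i (X (b'(i := ?bi)) i)"
    unfolding payment_def by (rule key[OF gs'' Yopt])
  also have "\<dots> = v i (X (b'(i := ?bi)) i \<inter> A i)" by simp
  also have "\<dots> \<le> v i (X (b'(i := ?bi)) i)" using val by (auto intro: val_mono)
  finally show "payment X (b'(i := ?bi)) i \<le> v i (X (b'(i := ?bi)) i)" .
qed

theorem lemma1:
  fixes v :: "'agent::finite \<Rightarrow> 'item::finite set \<Rightarrow> real"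
    and X :: "('agent \<Rightarrow> 'item set \<Rightarrow> real) \<Rightarrow> 'agent \<Rightarrow> 'item set"
  assumes "\<forall>i. GS (v i)"
    and "EW_allocation_rule X"
  shows "\<exists>b. pure_nash X v b \<and> optimal_partition v (X b) \<and>
             (\<forall>i. non_exposure X (v i) i (b i))"
proof -
  obtain A where Aopt: "optimal_partition v A" using opt_partition_exists by blast
  show ?thesis
    using main_nash[OF assms Aopt] main_optv[OF assms Aopt] main_nonexp[OF assms, where A=A]
    by blast
qed


end
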